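(* Let $\gamma = G_P + Q$ be a graph, where one of the following holds: (1) $G_P$ is a planar graph and $Q$ is $K_{1,1}$, $K_{2,2}$, or a set (with no edges) of an even number of vertices; (2) $G_P$ is an outerplanar graph and $Q$ is a set (with no edges) of an odd number of vertices. Then $\gamma$ is achirally embeddable in $S^3$.
   Context: A graph is achirally embeddable in $S^3$ if it has an embedding $\Gamma$ in $S^3$ for which there is an orientation-reversing homeomorphism $h$ of $S^3$ with $h(\Gamma)=\Gamma$. The join $A+B$ of graphs $A$ and $B$ is $A\cup B$ together with edges joining every vertex of $A$ to every vertex of $B$. A planar graph is called outerplanar if its join with a single vertex is still planar. *)

theory Defs
  imports "HOL-Homology.Homology"
begin

definition simple_graph :: "'v set \<Rightarrow> 'v set set \<Rightarrow> bool" where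
  "simple_graph V E \<longleftrightarrow> finite V \<and> E \<subseteq> {{a, b} | a b. a \<in> V \<and> b \<in> V \<and> a \<noteq> b}"

definition graph_embedding ::
  "'b topology \<Rightarrow> 'v set \<Rightarrow> 'v set set \<Rightarrow> ('v \<Rightarrow> 'b) \<Rightarrow> ('v set \<Rightarrow> real \<Rightarrow> 'b) \<Rightarrow> bool" where
  "graph_embedding X V E pos gam \<longleftrightarrow>
     pos ` V \<subseteq> topspace X \<and> inj_on pos V \<and>
     (\<forall>e\<in>E. pathin X (gam e) \<and> inj_on (gam e) {0..1} \<and> {gam e 0, gam e 1} = pos ` e \<and>
             gam e ` {0<..<1} \<inter> pos ` V = {}) \<and>
     (\<forall>e\<in>E. \<forall>e'\<in>E. e \<noteq> e' \<longrightarrow> gam e ` {0<..<1} \<inter> gam e' ` {0..1} = {})"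

definition embedding_image :: "'v set \<Rightarrow> 'v set set \<Rightarrow> ('v \<Rightarrow> 'b) \<Rightarrow> ('v set \<Rightarrow> real \<Rightarrow> 'b) \<Rightarrow> 'b set" where
  "embedding_image V E pos gam = pos ` V \<union> (\<Union>e\<in>E. gam e ` {0..1})"

definition planar :: "'v set \<Rightarrow> 'v set set \<Rightarrow> bool" where
  "planar V E \<longleftrightarrow> (\<exists>pos gam. graph_embedding (Euclidean_space 2) V E pos gam)"

definition join_V :: "'a set \<Rightarrow> 'b set \<Rightarrow> ('a + 'b) set" where
  "join_V VA VB = Inl ` VA \<union> Inr ` VB"

definition join_E :: "'a set \<Rightarrow> 'a set set \<Rightarrow> 'b set \<Rightarrow> 'b set set \<Rightarrow> ('a + 'b) set set" where
  "join_E VA EA VB EB = (image Inl) ` EA \<union> (image Inr) ` EB \<union> {{Inl a, Inr b} | a b. a \<in> VA \<and> b \<in> VB}"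

definition outerplanar :: "'v set \<Rightarrow> 'v set set \<Rightarrow> bool" where
  "outerplanar V E \<longleftrightarrow> planar V E \<and> planar (join_V V {()}) (join_E V E {()} {})"

text \<open>S^3 is nsphere 3; a homeomorphism of S^3 is orientation-reversing iff its Brouwer degree is -1.\<close>
definition achirally_embeddable :: "'v set \<Rightarrow> 'v set set \<Rightarrow> bool" where
  "achirally_embeddable V E \<longleftrightarrow>
     (\<exists>pos gam h. graph_embedding (nsphere 3) V E pos gam \<and>
        homeomorphic_map (nsphere 3) (nsphere 3) h \<and> Brouwer_degree2 3 h = -1 \<and>
        h ` embedding_image V E pos gam = embedding_image V E pos gam)"

definition K11_V :: "nat set" where "K11_V = {0, 1}"
definition K11_E :: "nat set set" where "K11_E = {{0, 1}}"
definition K22_V :: "nat set" where "K22_V = {0, 1, 2, 3}"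
definition K22_E :: "nat set set" where "K22_E = {{0, 2}, {0, 3}, {1, 2}, {1, 3}}"

end

theory Submission
  imports Defs
begin
definition emb :: "'v set \<Rightarrow> 'v set set \<Rightarrow> ('v \<Rightarrow> 'p::topological_space) \<Rightarrow> ('v set \<Rightarrow> real \<Rightarrow> 'p) \<Rightarrow> bool" where
  "emb V E P G \<longleftrightarrow> inj_on P V \<and>
     (\<forall>e\<in>E. continuous_on {0..1} (G e) \<and> inj_on (G e) {0..1} \<and> {G e 0, G e 1} = P ` e \<and>
             G e ` {0<..<1} \<inter> P ` V = {}) \<and>
     (\<forall>e\<in>E. \<forall>e'\<in>E. e \<noteq> e' \<longrightarrow> G e ` {0<..<1} \<inter> G e' ` {0..1} = {})"

definition sig :: "real \<times> real \<times> real \<Rightarrow> nat \<Rightarrow> real" where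
  "sig u = (case u of (x,y,z) \<Rightarrow> (let d = x\<^sup>2+y\<^sup>2+z\<^sup>2+1 in
     (\<lambda>i. if i=0 then 2 * z / d else if i=1 then 2*x/d else if i=2 then 2*y/d
          else if i=3 then (x\<^sup>2+y\<^sup>2+z\<^sup>2-1)/d else 0)))"

lemma pos3: "0 < x\<^sup>2+y\<^sup>2+z\<^sup>2+(1::real)"
  by (intro add_nonneg_pos add_nonneg_nonneg) auto

definition refl3 :: "real \<times> real \<times> real \<Rightarrow> real \<times> real \<times> real" where
  "refl3 u = (case u of (x,y,z) \<Rightarrow> (x,y,-z))"

lemma sq_id: "d \<noteq> 0 \<Longrightarrow> (2 * z / d)^2 + (2*x/d)^2 + (2*y/d)^2 + ((x\<^sup>2+y\<^sup>2+z\<^sup>2-1)/d)^2 = ((4*z^2+4*x^2+4*y^2+(x\<^sup>2+y\<^sup>2+z\<^sup>2-1)^2)/d^2::real)"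
  by (simp add: power_divide add_divide_distrib power_mult_distrib)

lemma sig_sphere: "(\<Sum>i\<le>3. sig u i ^ 2) = 1 \<and> (\<forall>i>3. sig u i = 0)"
proof -
  obtain x y z where u: "u = (x,y,z)" by (cases u) auto
  define d where "d = x\<^sup>2+y\<^sup>2+z\<^sup>2+1"
  have d: "d > 0" unfolding d_def by (rule pos3)
  have "(\<Sum>i\<le>3. sig u i ^ 2) = (2 * z / d)^2 + (2*x/d)^2 + (2*y/d)^2 + ((x\<^sup>2+y\<^sup>2+z\<^sup>2-1)/d)^2"
    by (simp add: u sig_def Let_def d_def numeral_3_eq_3 atMost_Suc)
  also have "\<dots> = ((4*z^2+4*x^2+4*y^2+(x\<^sup>2+y\<^sup>2+z\<^sup>2-1)^2)/d^2)" using d by (intro sq_id) simp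
  also have "4*z^2+4*x^2+4*y^2+(x\<^sup>2+y\<^sup>2+z\<^sup>2-1)^2 = d^2" unfolding d_def power2_eq_square by (simp add: algebra_simps)
  also have "d^2/d^2 = 1" using d by simp
  finally show ?thesis by (simp add: u sig_def Let_def)
qed

lemma frac_inj:
  assumes "d > 0" "f > 0" "(d-2)/d = (f-2)/(f::real)" shows "d = f"
proof -
  have "(d-2)/d = 1 - 2/d" "(f-2)/f = 1 - 2/f" using assms by (simp_all add: diff_divide_distrib)
  hence "2/d = 2/f" using assms(3) by linarith
  thus ?thesis by simp
qed

lemma sig_inj: "inj sig"
proof
  fix u v assume eq: "sig u = sig v"
  obtain x y z where u: "u = (x,y,z)" by (cases u) auto
  obtain a1 b1 c1 where v: "v = (a1,b1,c1)" by (cases v) auto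
  define d where "d = x\<^sup>2+y\<^sup>2+z\<^sup>2+1"
  define f where "f = a1^2+b1^2 + c1^2 + 1"
  have d: "d > 0" unfolding d_def by (rule pos3)
  have e: "f > 0" unfolding f_def by (rule pos3)
  have s: "\<And>i. sig u i = sig v i" using eq by simp
  have s3: "(x\<^sup>2+y\<^sup>2+z\<^sup>2-1)/d = (a1^2+b1^2 + c1^2 - 1)/f" using s[of 3] by (simp add: u v sig_def Let_def d_def f_def)
  have "(x\<^sup>2+y\<^sup>2+z\<^sup>2-1) = d - 2" "(a1^2+b1^2 + c1^2 - 1) = f-2" by (simp_all add: d_def f_def)
  with s3 have "d = f" using frac_inj d e by metis
  moreover have "2 * z / d = 2 * c1/f" "2*x/d = 2*a1/f" "2*y/d=2*b1/f"
    using s[of 0] s[of 1] s[of 2] by (simp_all add: u v sig_def Let_def d_def f_def)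
  ultimately show "u = v" using d by (simp add: u v)
qed

lemma dnz: "(a::real)\<^sup>2 + b\<^sup>2 + c\<^sup>2 + 1 \<noteq> 0"
  using pos3[of a b c] by linarith

lemma sig_cont0: "continuous_on UNIV (\<lambda>u::real\<times>real\<times>real. 2 * snd (snd u) / ((fst u)\<^sup>2 + (fst (snd u))\<^sup>2 + (snd (snd u))\<^sup>2 + 1))"
  using dnz by (intro continuous_intros) auto
lemma sig_cont1: "continuous_on UNIV (\<lambda>u::real\<times>real\<times>real. 2 * fst u / ((fst u)\<^sup>2 + (fst (snd u))\<^sup>2 + (snd (snd u))\<^sup>2 + 1))"
  using dnz by (intro continuous_intros) auto
lemma sig_cont2: "continuous_on UNIV (\<lambda>u::real\<times>real\<times>real. 2 * fst (snd u) / ((fst u)\<^sup>2 + (fst (snd u))\<^sup>2 + (snd (snd u))\<^sup>2 + 1))"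
  using dnz by (intro continuous_intros) auto
lemma sig_cont3: "continuous_on UNIV (\<lambda>u::real\<times>real\<times>real. ((fst u)\<^sup>2 + (fst (snd u))\<^sup>2 + (snd (snd u))\<^sup>2 - 1) / ((fst u)\<^sup>2 + (fst (snd u))\<^sup>2 + (snd (snd u))\<^sup>2 + 1))"
  using dnz by (intro continuous_intros) auto

lemma sig_cont: "continuous_on UNIV (\<lambda>u. sig u i)"
proof -
  consider "i=0" | "i=1" | "i=2" | "i=3" | "i>3" by linarith
  then show ?thesis
  proof cases
    case 1 then show ?thesis using sig_cont0 by (simp add: sig_def Let_def case_prod_beta)
  next
    case 2 then show ?thesis using sig_cont1 by (simp add: sig_def Let_def case_prod_beta)
  next
    case 3 then show ?thesis using sig_cont2 by (simp add: sig_def Let_def case_prod_beta)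
  next
    case 4 then show ?thesis using sig_cont3 by (simp add: sig_def Let_def case_prod_beta)
  next
    case 5 then show ?thesis by (simp add: sig_def Let_def case_prod_beta)
  qed
qed

lemma sig_refl: "sig (refl3 u) = (\<lambda>i. if i = 0 then - sig u i else sig u i)"
  by (auto simp: sig_def refl3_def Let_def split: prod.splits)

lemma pathin_sig: "continuous_on {0..1} g \<Longrightarrow> pathin (nsphere 3) (sig \<circ> g)"
  unfolding pathin_def nsphere
  apply (simp add: continuous_map_in_subtopology continuous_map_componentwise_UNIV sig_sphere Pi_iff)
  apply (intro allI continuous_on_compose2[OF sig_cont]) apply auto
  done

lemma sig_disj: "f ` A \<inter> g ` B = {} \<Longrightarrow> (sig \<circ> f) ` A \<inter> (sig \<circ> g) ` B = {}"
proof -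
  assume H: "f ` A \<inter> g ` B = {}"
  { fix a b assume ab: "a\<in>A" "b\<in>B" "sig (f a) = sig (g b)"
    hence "f a = g b" using sig_inj by (simp add: inj_eq)
    with H ab(1,2) have False by blast }
  thus ?thesis by auto
qed

lemma achiral_from_emb:
  assumes "emb V E P G"
    and "refl3 ` (P ` V \<union> (\<Union>e\<in>E. G e ` {0..1})) = P ` V \<union> (\<Union>e\<in>E. G e ` {0..1})"
  shows "achirally_embeddable V E"
proof -
  let ?h = "\<lambda>x i. if i = 0 then -x i else (x i::real)"
  let ?S = "P ` V \<union> (\<Union>e\<in>E. G e ` {0..1})"
  have ge: "graph_embedding (nsphere 3) V E (sig \<circ> P) (\<lambda>e. sig \<circ> G e)"
    using assms(1) unfolding emb_def graph_embedding_def
    apply (intro conjI)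
    subgoal by (auto simp: nsphere sig_sphere)
    subgoal by (meson comp_inj_on inj_on_subset sig_inj subset_UNIV)
    subgoal apply (intro ballI conjI)
      subgoal by (simp add: pathin_sig)
      subgoal by (meson comp_inj_on inj_on_subset sig_inj subset_UNIV)
      subgoal for e proof -
        assume a: "inj_on P V \<and> (\<forall>e\<in>E. continuous_on {0..1} (G e) \<and> inj_on (G e) {0..1} \<and> {G e 0, G e 1} = P ` e \<and> G e ` {0<..<1} \<inter> P ` V = {}) \<and>
          (\<forall>e\<in>E. \<forall>e'\<in>E. e \<noteq> e' \<longrightarrow> G e ` {0<..<1} \<inter> G e' ` {0..1} = {})" and e: "e \<in> E"
        hence "sig ` {G e 0, G e 1} = sig ` P ` e" by simp
        thus ?thesis by (simp add: image_image)
      qed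
      subgoal by (intro sig_disj) blast
      done
    subgoal by (intro ballI impI sig_disj) blast
    done
  have img: "embedding_image V E (sig \<circ> P) (\<lambda>e. sig \<circ> G e) = sig ` ?S"
    by (simp add: embedding_image_def image_Un image_UN image_image)
  have "?h ` (sig ` ?S) = sig ` (refl3 ` ?S)" by (simp add: image_image sig_refl)
  also have "\<dots> = sig ` ?S" using assms(2) by simp
  finally have "?h ` embedding_image V E (sig \<circ> P) (\<lambda>e. sig \<circ> G e) = embedding_image V E (sig \<circ> P) (\<lambda>e. sig \<circ> G e)"
    unfolding img .
  moreover have "homeomorphic_map (nsphere 3) (nsphere 3) ?h"
    by (rule homeomorphic_map_involution) (auto simp: continuous_map_nsphere_reflection)
  ultimately show ?thesis unfolding achirally_embeddable_def
    using ge Brouwer_degree2_reflection by blast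
qed

definition pl :: "real \<times> real \<Rightarrow> real \<times> real \<times> real" where
  "pl a = (fst a, snd a, 0)"

definition cone :: "real \<Rightarrow> real \<Rightarrow> real \<Rightarrow> real \<times> real \<Rightarrow> real \<Rightarrow> real \<times> real \<times> real" where
  "cone p1 p2 h a s = (p1 + s * (fst a - p1), p2 + s * (snd a - p2), (1 - s) * h)"

definition cross :: "real \<times> real \<Rightarrow> real \<times> real \<Rightarrow> real" where
  "cross a b = fst a * snd b - snd a * fst b"

lemma pl_inj: "pl a = pl b \<longleftrightarrow> a = b"
  by (auto simp: pl_def prod_eq_iff)

lemma cone_y: "snd a \<noteq> p2 \<Longrightarrow> fst (snd (cone p1 p2 h a s)) = p2 \<Longrightarrow> s = 0"
  by (simp add: cone_def)

lemma cone_z0: "h \<noteq> 0 \<Longrightarrow> snd (snd (cone p1 p2 h a s)) = 0 \<Longrightarrow> s = 1"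
  by (simp add: cone_def)

lemma cone_cross:
  assumes "cross (fst a - p1, snd a - p2) (fst b - p1, snd b - p2) \<noteq> 0"
    and "cone p1 p2 h a s = cone p1 p2 h' b t"
  shows "s = 0"
proof -
  have e1: "s * (fst a - p1) = t * (fst b - p1)" and e2: "s * (snd a - p2) = t * (snd b - p2)"
    using assms(2) by (simp_all add: cone_def prod_eq_iff)
  have "s * cross (fst a - p1, snd a - p2) (fst b - p1, snd b - p2) =
        (s * (fst a - p1)) * (snd b - p2) - (s * (snd a - p2)) * (fst b - p1)"
    by (simp add: cross_def algebra_simps)
  also have "\<dots> = (t * (fst b - p1)) * (snd b - p2) - (t * (snd b - p2)) * (fst b - p1)"
    by (simp only: e1 e2)
  also have "\<dots> = 0" by (simp add: algebra_simps)
  finally show ?thesis using assms(1) by simp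
qed

lemma cone_same:
  assumes "snd a \<noteq> p2" "h \<noteq> h'" "cone p1 p2 h a s = cone p1 p2 h' a t"
  shows "s = 1"
proof -
  have "s * (snd a - p2) = t * (snd a - p2)" using assms(3) by (simp add: cone_def prod_eq_iff)
  hence st: "s = t" using assms(1) by simp
  have "(1 - s) * h = (1 - t) * h'" using assms(3) by (simp add: cone_def prod_eq_iff)
  hence "(1 - s) * (h - h') = 0" using st by (simp add: algebra_simps)
  thus ?thesis using assms(2) by simp
qed

lemma cone_inj: "snd a \<noteq> p2 \<Longrightarrow> inj_on (cone p1 p2 h a) S"
  by (auto simp: inj_on_def cone_def prod_eq_iff)

lemma cone_cont: "continuous_on S (cone p1 p2 h a)"
  unfolding cone_def by (intro continuous_intros)

lemma cone_0: "cone p1 p2 h a 0 = (p1, p2, h)" and cone_1: "cone p1 p2 h a 1 = pl a"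
  by (simp_all add: cone_def pl_def)

lemma refl3_cone: "refl3 (cone p1 p2 h a s) = cone p1 p2 (-h) a s"
  by (simp add: refl3_def cone_def)

lemma refl3_pl: "refl3 (pl a) = pl a"
  by (simp add: refl3_def pl_def)

lemma refl3_refl3: "refl3 (refl3 u) = u"
  by (simp add: refl3_def split: prod.splits)

lemma refl3_image_eq: "refl3 ` S \<subseteq> S \<Longrightarrow> refl3 ` S = S"
proof
  assume a: "refl3 ` S \<subseteq> S"
  show "S \<subseteq> refl3 ` S"
  proof
    fix x assume "x \<in> S"
    hence "refl3 x \<in> S" using a by blast
    thus "x \<in> refl3 ` S" by (metis image_eqI refl3_refl3)
  qed
qed

locale cfg =
  fixes B :: "'b set" and EB :: "'b set set" and P2 :: "'b \<Rightarrow> real \<times> real"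
    and g2 :: "'b set \<Rightarrow> real \<Rightarrow> real \<times> real" and B0 :: "'b set"
    and Q :: "nat set" and EQ :: "nat set set" and ht :: "nat \<Rightarrow> real"
    and QP :: "nat set \<Rightarrow> real \<Rightarrow> real \<times> real \<times> real" and p1 p2 :: real
  assumes emb2: "emb B EB P2 g2"
    and EBsub: "\<And>e. e \<in> EB \<Longrightarrow> e \<subseteq> B"
    and B0sub: "B0 \<subseteq> B"
    and ht_inj: "inj_on ht Q" and ht_nz: "\<And>i. i \<in> Q \<Longrightarrow> ht i \<noteq> 0"
    and ht_sym: "\<And>i. i \<in> Q \<Longrightarrow> \<exists>j\<in>Q. ht j = - ht i"
    and EQsub: "\<And>qq. qq \<in> EQ \<Longrightarrow> qq \<subseteq> Q \<and> qq \<noteq> {}"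
    and Q1: "\<And>qq. qq \<in> EQ \<Longrightarrow> continuous_on {0..1} (QP qq) \<and> inj_on (QP qq) {0..1} \<and>
               {QP qq 0, QP qq 1} = (\<lambda>i. (p1, p2, ht i)) ` qq"
    and Q2: "\<And>qq t x y z. qq \<in> EQ \<Longrightarrow> t \<in> {0..1} \<Longrightarrow> QP qq t = (x, y, z) \<Longrightarrow>
               y = p2 \<and> (z = 0 \<longrightarrow> x = p1 \<or> x = p1 + 1)"
    and Q3: "\<And>qq t i. qq \<in> EQ \<Longrightarrow> t \<in> {0<..<1} \<Longrightarrow> i \<in> Q \<Longrightarrow> QP qq t \<noteq> (p1, p2, ht i)"
    and Q4: "\<And>qq qq'. qq \<in> EQ \<Longrightarrow> qq' \<in> EQ \<Longrightarrow> qq \<noteq> qq' \<Longrightarrow> QP qq ` {0<..<1} \<inter> QP qq' ` {0..1} = {}"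
    and Q5: "refl3 ` (\<Union>qq\<in>EQ. QP qq ` {0..1}) \<subseteq> (\<Union>qq\<in>EQ. QP qq ` {0..1})"
    and Pp1: "(p1, p2) \<notin> P2 ` B \<union> (\<Union>e\<in>EB. g2 e ` {0..1})"
    and Pq1: "(p1 + 1, p2) \<notin> P2 ` B \<union> (\<Union>e\<in>EB. g2 e ` {0..1})"
    and Pp2: "\<And>v. v \<in> B \<Longrightarrow> snd (P2 v) \<noteq> p2"
    and Pp3: "\<And>v w. v \<in> B \<Longrightarrow> w \<in> B \<Longrightarrow> v \<noteq> w \<Longrightarrow>
               cross (fst (P2 v) - p1, snd (P2 v) - p2) (fst (P2 w) - p1, snd (P2 w) - p2) \<noteq> 0"
begin

definition P3 :: "'b + nat \<Rightarrow> real \<times> real \<times> real" where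
  "P3 x = (case x of Inl v \<Rightarrow> pl (P2 v) | Inr i \<Rightarrow> (p1, p2, ht i))"

definition G3 :: "('b + nat) set \<Rightarrow> real \<Rightarrow> real \<times> real \<times> real" where
  "G3 e = (if e \<subseteq> range Inl then pl \<circ> g2 (Inl -` e) else if e \<subseteq> range Inr then QP (Inr -` e)
           else cone p1 p2 (ht (THE i. Inr i \<in> e)) (P2 (THE a. Inl a \<in> e)))"

definition W :: "('b + nat) set" where "W = Inl ` B \<union> Inr ` Q"

definition EW :: "('b + nat) set set" where
  "EW = image Inl ` EB \<union> image Inr ` EQ \<union> {{Inl a, Inr b} | a b. a \<in> B0 \<and> b \<in> Q}"

lemma emb2_facts:
  "inj_on P2 B"
  "\<And>e. e \<in> EB \<Longrightarrow> continuous_on {0..1} (g2 e)"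
  "\<And>e. e \<in> EB \<Longrightarrow> inj_on (g2 e) {0..1}"
  "\<And>e. e \<in> EB \<Longrightarrow> {g2 e 0, g2 e 1} = P2 ` e"
  "\<And>e. e \<in> EB \<Longrightarrow> g2 e ` {0<..<1} \<inter> P2 ` B = {}"
  "\<And>e e'. e \<in> EB \<Longrightarrow> e' \<in> EB \<Longrightarrow> e \<noteq> e' \<Longrightarrow> g2 e ` {0<..<1} \<inter> g2 e' ` {0..1} = {}"
  using emb2 unfolding emb_def by blast+

lemma EB_ne: "e \<in> EB \<Longrightarrow> e \<noteq> {}"
  using emb2_facts(4)[of e] by auto

lemma G3_base: "e \<in> EB \<Longrightarrow> G3 (Inl ` e) = pl \<circ> g2 e"
  by (auto simp: G3_def vimage_image_eq inj_on_def)

lemma G3_Q: "qq \<in> EQ \<Longrightarrow> G3 (Inr ` qq) = QP qq"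
proof -
  assume a: "qq \<in> EQ"
  then obtain i where "i \<in> qq" using EQsub by blast
  hence "\<not> Inr ` qq \<subseteq> range Inl" by auto
  thus ?thesis by (auto simp: G3_def vimage_image_eq inj_on_def)
qed

lemma G3_cone: "G3 {Inl a, Inr i} = cone p1 p2 (ht i) (P2 a)"
proof -
  have "(THE j. Inr j \<in> {Inl a, Inr i}) = i" by (rule the_equality) auto
  moreover have "(THE b. Inl b \<in> {Inl a, Inr i}) = a" by (rule the_equality) auto
  moreover have "\<not> {Inl a, Inr i} \<subseteq> range Inl" "\<not> {Inl a, Inr i} \<subseteq> range (Inr::nat \<Rightarrow> 'b + nat)" by auto
  ultimately show ?thesis unfolding G3_def by simp
qed

lemma P3_Inl: "P3 (Inl v) = pl (P2 v)" and P3_Inr: "P3 (Inr i) = (p1, p2, ht i)"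
  by (simp_all add: P3_def)

lemma EW_cases:
  assumes "e \<in> EW"
  obtains (base) e0 where "e0 \<in> EB" "e = Inl ` e0" "G3 e = pl \<circ> g2 e0"
    | (qe) qq where "qq \<in> EQ" "e = Inr ` qq" "G3 e = QP qq"
    | (cn) a i where "a \<in> B0" "i \<in> Q" "e = {Inl a, Inr i}" "G3 e = cone p1 p2 (ht i) (P2 a)"
  using assms unfolding EW_def by (auto simp: G3_base G3_Q G3_cone)

definition G2img where "G2img = P2 ` B \<union> (\<Union>e\<in>EB. g2 e ` {0..1})"

lemma snd_P2: "a \<in> P2 ` B \<Longrightarrow> snd a \<noteq> p2"
  using Pp2 by auto

lemma Qpt_z0: "qq \<in> EQ \<Longrightarrow> t \<in> {0..1} \<Longrightarrow> snd (snd (QP qq t)) = 0 \<Longrightarrow> (fst (QP qq t), fst (snd (QP qq t))) \<notin> G2img"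
proof -
  assume a: "qq \<in> EQ" "t \<in> {0..1}" "snd (snd (QP qq t)) = 0"
  obtain x y z where xyz: "QP qq t = (x, y, z)" by (cases "QP qq t") auto
  from Q2[OF a(1,2) xyz] a(3) xyz have "y = p2" "x = p1 \<or> x = p1 + 1" by auto
  thus ?thesis using Pp1 Pq1 xyz unfolding G2img_def by auto
qed

lemma Qpt_y: "qq \<in> EQ \<Longrightarrow> t \<in> {0..1} \<Longrightarrow> fst (snd (QP qq t)) = p2"
  using Q2 by (metis prod.collapse)

lemma base_in_G2: "e \<in> EB \<Longrightarrow> t \<in> {0..1} \<Longrightarrow> g2 e t \<in> G2img"
  unfolding G2img_def by blast

lemma P2_in: "v \<in> B \<Longrightarrow> P2 v \<in> G2img" unfolding G2img_def by auto

lemma ht_Q_nz: "i \<in> Q \<Longrightarrow> ht i \<noteq> 0" by (rule ht_nz)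

lemma D_bq: "e0 \<in> EB \<Longrightarrow> qq \<in> EQ \<Longrightarrow> s \<in> {0..1} \<Longrightarrow> t \<in> {0..1} \<Longrightarrow> pl (g2 e0 s) \<noteq> QP qq t"
proof
  assume a: "e0 \<in> EB" "qq \<in> EQ" "s \<in> {0..1}" "t \<in> {0..1}" and qq: "pl (g2 e0 s) = QP qq t"
  hence "snd (snd (QP qq t)) = 0" by (metis pl_def snd_conv)
  hence "(fst (QP qq t), fst (snd (QP qq t))) \<notin> G2img" using Qpt_z0 a by blast
  moreover have "(fst (QP qq t), fst (snd (QP qq t))) = g2 e0 s" using qq[symmetric] by (simp add: pl_def)
  ultimately show False using base_in_G2 a by auto
qed

lemma D_bc: "e0 \<in> EB \<Longrightarrow> v \<in> B \<Longrightarrow> i \<in> Q \<Longrightarrow> s \<in> {0<..<1} \<Longrightarrow> pl (g2 e0 s) \<noteq> cone p1 p2 (ht i) (P2 v) t"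
proof
  assume a: "e0 \<in> EB" "v \<in> B" "i \<in> Q" "s \<in> {0<..<1}" and qq: "pl (g2 e0 s) = cone p1 p2 (ht i) (P2 v) t"
  hence "snd (snd (cone p1 p2 (ht i) (P2 v) t)) = 0" by (metis pl_def snd_conv)
  hence "t = 1" using cone_z0 ht_nz a by blast
  hence "g2 e0 s = P2 v" using qq by (simp add: cone_1 pl_inj)
  thus False using emb2_facts(5)[OF a(1)] a by blast
qed

lemma D_qc: "qq \<in> EQ \<Longrightarrow> v \<in> B \<Longrightarrow> i \<in> Q \<Longrightarrow> s \<in> {0<..<1} \<Longrightarrow> QP qq s \<noteq> cone p1 p2 (ht i) (P2 v) t"
proof
  assume a: "qq \<in> EQ" "v \<in> B" "i \<in> Q" "s \<in> {0<..<1}" and qq: "QP qq s = cone p1 p2 (ht i) (P2 v) t"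
  have "fst (snd (cone p1 p2 (ht i) (P2 v) t)) = p2" using Qpt_y[OF a(1)] a(4) qq by (metis greaterThanLessThan_iff atLeastAtMost_iff less_imp_le)
  hence "t = 0" using cone_y Pp2 a by blast
  thus False using Q3 a qq by (simp add: cone_0)
qed

lemma D_cb: "v \<in> B \<Longrightarrow> i \<in> Q \<Longrightarrow> s \<in> {0<..<1} \<Longrightarrow> cone p1 p2 (ht i) (P2 v) s \<noteq> pl x"
proof
  assume a: "v \<in> B" "i \<in> Q" "s \<in> {0<..<1}" and qq: "cone p1 p2 (ht i) (P2 v) s = pl x"
  hence "snd (snd (cone p1 p2 (ht i) (P2 v) s)) = 0" by (simp add: pl_def)
  hence "s = 1" using cone_z0 ht_nz a by blast
  thus False using a by simp
qed

lemma D_cq: "qq \<in> EQ \<Longrightarrow> v \<in> B \<Longrightarrow> t \<in> {0..1} \<Longrightarrow> s \<in> {0<..<1} \<Longrightarrow> cone p1 p2 h (P2 v) s \<noteq> QP qq t"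
proof
  assume a: "qq \<in> EQ" "v \<in> B" "t \<in> {0..1}" "s \<in> {0<..<1}" and qq: "cone p1 p2 h (P2 v) s = QP qq t"
  have "fst (snd (cone p1 p2 h (P2 v) s)) = p2" using Qpt_y[OF a(1,3)] qq by simp
  hence "s = 0" using cone_y Pp2 a by blast
  thus False using a by simp
qed

lemma D_cc: "v \<in> B \<Longrightarrow> w \<in> B \<Longrightarrow> i \<in> Q \<Longrightarrow> j \<in> Q \<Longrightarrow> (v, i) \<noteq> (w, j) \<Longrightarrow> s \<in> {0<..<1} \<Longrightarrow>
   cone p1 p2 (ht i) (P2 v) s \<noteq> cone p1 p2 (ht j) (P2 w) t"
proof
  assume a: "v \<in> B" "w \<in> B" "i \<in> Q" "j \<in> Q" "(v, i) \<noteq> (w, j)" "s \<in> {0<..<1}"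
    and qq: "cone p1 p2 (ht i) (P2 v) s = cone p1 p2 (ht j) (P2 w) t"
  show False
  proof (cases "v = w")
    case True
    hence "i \<noteq> j" using a by auto
    hence "ht i \<noteq> ht j" using ht_inj a by (meson inj_onD)
    hence "s = 1" using cone_same[of "P2 v" p2 "ht i" "ht j" p1 s t] qq Pp2 a True by blast
    thus False using a by simp
  next
    case False
    hence "s = 0" using cone_cross[of "P2 v" p1 p2 "P2 w" "ht i" s "ht j" t] Pp3 a qq by blast
    thus False using a by simp
  qed
qed

lemma disj_EW:
  assumes "e \<in> EW" "e' \<in> EW" "e \<noteq> e'"
  shows "G3 e ` {0<..<1} \<inter> G3 e' ` {0..1} = {}"
proof (rule ccontr)
  assume "G3 e ` {0<..<1} \<inter> G3 e' ` {0..1} \<noteq> {}"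
  then obtain s t where st: "s \<in> {0<..<1}" "t \<in> {0..1}" and qq: "G3 e s = G3 e' t" by blast
  have s01: "s \<in> {0..1}" using st by auto
  from assms(1) show False
  proof (cases rule: EW_cases)
    case (base e0)
    from assms(2) show False
    proof (cases rule: EW_cases)
      case (base e1)
      hence "e0 \<noteq> e1" using \<open>e = Inl ` e0\<close> assms(3) by auto
      moreover have "g2 e0 s = g2 e1 t" using qq base \<open>G3 e = pl \<circ> g2 e0\<close> by (simp add: pl_inj)
      ultimately show False using emb2_facts(6)[of e0 e1] \<open>e0 \<in> EB\<close> \<open>e1 \<in> EB\<close> st by blast
    next
      case (qe qq')
      thus False using D_bq[of e0 qq' s t] qq base st s01 by simp
    next
      case (cn a i)
      thus False using D_bc[of e0 a i s t] qq base st B0sub by auto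
    qed
  next
    case (qe q)
    from assms(2) show False
    proof (cases rule: EW_cases)
      case (base e1)
      thus False using D_bq[of e1 q t s] qq qe st s01 by simp
    next
      case (qe q')
      hence "q \<noteq> q'" using \<open>e = Inr ` q\<close> assms(3) by auto
      moreover have "QP q s \<in> QP q ` {0<..<1}" using st by blast
      moreover have "QP q s = QP q' t" using qq \<open>G3 e = QP q\<close> \<open>G3 e' = QP q'\<close> by simp
      moreover have "QP q' t \<in> QP q' ` {0..1}" using st by blast
      ultimately show False using Q4[of q q'] \<open>q \<in> EQ\<close> \<open>q' \<in> EQ\<close> by (metis disjoint_iff)
    next
      case (cn a i)
      thus False using D_qc[of q a i s t] qq qe st B0sub by auto
    qed
  next
    case (cn a i)
    note outer = cn
    from assms(2) show False
    proof (cases rule: EW_cases)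
      case (base e1)
      thus False using D_cb[of a i s "g2 e1 t"] qq cn st B0sub by auto
    next
      case (qe q')
      thus False using D_cq[of q' a t s "ht i"] qq cn st B0sub by auto
    next
      case (cn b j)
      hence "(a, i) \<noteq> (b, j)" using outer assms(3) by auto
      thus False using D_cc[of a b i j s t] qq cn outer st B0sub by auto
    qed
  qed
qed

lemma inj_P3: "inj_on P3 W"
proof (rule inj_onI)
  fix x y assume xy: "x \<in> W" "y \<in> W" "P3 x = P3 y"
  show "x = y"
  proof (cases x)
    case (Inl v)
    show ?thesis
    proof (cases y)
      case (Inl w)
      thus ?thesis using xy \<open>x = Inl v\<close> emb2_facts(1) unfolding W_def by (auto simp: P3_Inl pl_inj inj_on_def)
    next
      case (Inr j)
      thus ?thesis using xy \<open>x = Inl v\<close> ht_nz unfolding W_def by (auto simp: P3_Inl P3_Inr pl_def)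
    qed
  next
    case (Inr i)
    show ?thesis
    proof (cases y)
      case (Inl w)
      thus ?thesis using xy \<open>x = Inr i\<close> ht_nz unfolding W_def by (auto simp: P3_Inl P3_Inr pl_def)
    next
      case (Inr j)
      thus ?thesis using xy \<open>x = Inr i\<close> ht_inj unfolding W_def by (auto simp: P3_Inr inj_on_def)
    qed
  qed
qed

lemma edge_EW:
  assumes "e \<in> EW"
  shows "continuous_on {0..1} (G3 e) \<and> inj_on (G3 e) {0..1} \<and> {G3 e 0, G3 e 1} = P3 ` e \<and>
         G3 e ` {0<..<1} \<inter> P3 ` W = {}"
  using assms
proof (cases rule: EW_cases)
  case (base e0)
  have c: "continuous_on {0..1} (pl \<circ> g2 e0)" unfolding pl_def o_def
    using emb2_facts(2)[OF base(1)] by (intro continuous_intros)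
  have i: "inj_on (pl \<circ> g2 e0) {0..1}" using emb2_facts(3)[OF base(1)]
    by (auto simp: inj_on_def pl_inj)
  have en: "{(pl \<circ> g2 e0) 0, (pl \<circ> g2 e0) 1} = P3 ` e"
  proof -
    have "pl ` {g2 e0 0, g2 e0 1} = pl ` P2 ` e0" using emb2_facts(4)[OF base(1)] by simp
    thus ?thesis using base(2) by (simp add: image_image P3_Inl)
  qed
  let ?F = "pl \<circ> g2 e0" let ?A = "?F ` {0<..<1}"
  have d: "(pl \<circ> g2 e0) ` {0<..<1} \<inter> P3 ` W = {}"
  proof -
    { fix s x assume s: "s \<in> {0<..<1}" and x: "x \<in> W" and eq: "?F s = P3 x"
      have False
      proof (cases x)
        case (Inl v)
        hence "v \<in> B" using x unfolding W_def by auto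
        moreover have "g2 e0 s = P2 v" using eq Inl by (simp add: P3_Inl pl_inj)
        ultimately show False using emb2_facts(5)[OF base(1)] s by blast
      next
        case (Inr i)
        hence "i \<in> Q" using x unfolding W_def by auto
        moreover have "ht i = 0" using eq Inr by (simp add: P3_Inr pl_def)
        ultimately show False using ht_nz by blast
      qed }
    note H = this
    show ?thesis
    proof (rule equals0I)
      fix y assume "y \<in> ?A \<inter> P3 ` W"
      then obtain s x where "s \<in> {0<..<1}" "x \<in> W" "y = ?F s" "y = P3 x" by blast
      thus False using H by metis
    qed
  qed
  show ?thesis using c i en d base(3) by simp
next
  case (qe q)
  have en: "{QP q 0, QP q 1} = P3 ` e" using Q1[OF qe(1)] qe(2) by (simp add: image_image P3_Inr)
  let ?F = "QP q" let ?A = "?F ` {0<..<1}"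
  have d: "QP q ` {0<..<1} \<inter> P3 ` W = {}"
  proof -
    { fix s x assume s: "s \<in> {0<..<1}" and x: "x \<in> W" and eq: "?F s = P3 x"
      have s1: "s \<in> {0..1}" using s by auto
      have False
      proof (cases x)
        case (Inl v)
        hence v: "v \<in> B" using x unfolding W_def by auto
        have "snd (snd (QP q s)) = 0" using eq Inl by (simp add: P3_Inl pl_def)
        hence "(fst (QP q s), fst (snd (QP q s))) \<notin> G2img" using Qpt_z0 qe(1) s1 by blast
        moreover have "(fst (QP q s), fst (snd (QP q s))) = P2 v" using eq Inl by (simp add: P3_Inl pl_def)
        ultimately show False using P2_in v by simp
      next
        case (Inr i)
        hence "i \<in> Q" using x unfolding W_def by auto
        hence "QP q s \<noteq> (p1, p2, ht i)" using Q3[OF qe(1) s] by blast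
        thus False using eq Inr by (simp add: P3_Inr)
      qed }
    note H = this
    show ?thesis
    proof (rule equals0I)
      fix y assume "y \<in> ?A \<inter> P3 ` W"
      then obtain s x where "s \<in> {0<..<1}" "x \<in> W" "y = ?F s" "y = P3 x" by blast
      thus False using H by metis
    qed
  qed
  show ?thesis using Q1[OF qe(1)] en d qe(3) by simp
next
  case (cn a i)
  have a: "a \<in> B" using cn(1) B0sub by auto
  have en: "{cone p1 p2 (ht i) (P2 a) 0, cone p1 p2 (ht i) (P2 a) 1} = P3 ` e"
    using cn(3) by (simp add: cone_0 cone_1 P3_Inl P3_Inr insert_commute)
  let ?F = "cone p1 p2 (ht i) (P2 a)" let ?A = "?F ` {0<..<1}"
  have d: "cone p1 p2 (ht i) (P2 a) ` {0<..<1} \<inter> P3 ` W = {}"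
  proof -
    { fix s x assume s: "s \<in> {0<..<1}" and x: "x \<in> W" and eq: "?F s = P3 x"
      have False
      proof (cases x)
        case (Inl v)
        thus False using D_cb[OF a cn(2) s, of "P2 v"] eq by (simp add: P3_Inl)
      next
        case (Inr j)
        hence "fst (snd (cone p1 p2 (ht i) (P2 a) s)) = p2" using eq by (simp add: P3_Inr)
        hence "s = 0" using cone_y Pp2 a by blast
        thus False using s by simp
      qed }
    note H = this
    show ?thesis
    proof (rule equals0I)
      fix y assume "y \<in> ?A \<inter> P3 ` W"
      then obtain s x where "s \<in> {0<..<1}" "x \<in> W" "y = ?F s" "y = P3 x" by blast
      thus False using H by metis
    qed
  qed
  show ?thesis using cone_cont cone_inj Pp2[OF a] en d cn(4) by simp
qed

lemma emb_W: "emb W EW P3 G3"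
  unfolding emb_def using inj_P3 edge_EW disj_EW by blast

definition S3 where "S3 = P3 ` W \<union> (\<Union>e\<in>EW. G3 e ` {0..1})"

lemma refl_S3: "refl3 ` S3 \<subseteq> S3"
proof
  fix y assume "y \<in> refl3 ` S3"
  then obtain x where x: "x \<in> S3" and y: "y = refl3 x" by blast
  show "y \<in> S3"
  proof (cases "x \<in> P3 ` W")
    case True
    then obtain w where w: "w \<in> W" "x = P3 w" by blast
    show ?thesis
    proof (cases w)
      case (Inl v)
      hence "y = x" using w y by (simp add: P3_Inl refl3_pl)
      thus ?thesis using x by simp
    next
      case (Inr i)
      hence i: "i \<in> Q" using w unfolding W_def by auto
      then obtain j where j: "j \<in> Q" "ht j = - ht i" using ht_sym by blast
      have "y = P3 (Inr j)" using w Inr y j by (simp add: P3_Inr refl3_def)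
      moreover have "Inr j \<in> W" using j unfolding W_def by auto
      ultimately show ?thesis unfolding S3_def by blast
    qed
  next
    case False
    then obtain e s where e: "e \<in> EW" "s \<in> {0..1}" "x = G3 e s" using x unfolding S3_def by blast
    from e(1) show ?thesis
    proof (cases rule: EW_cases)
      case (base e0)
      hence "y = x" using e y by (simp add: refl3_pl)
      thus ?thesis using x by simp
    next
      case (qe q)
      have "x = QP q s" using e(3) qe(3) by simp
      hence "x \<in> (\<Union>qq\<in>EQ. QP qq ` {0..1})" using qe(1) e(2) by blast
      hence "y \<in> refl3 ` (\<Union>qq\<in>EQ. QP qq ` {0..1})" using y by blast
      hence "y \<in> (\<Union>qq\<in>EQ. QP qq ` {0..1})" using Q5 by blast
      then obtain q' t where "q' \<in> EQ" "t \<in> {0..1}" "y = QP q' t" by blast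
      moreover have "Inr ` q' \<in> EW" using \<open>q' \<in> EQ\<close> unfolding EW_def by (intro UnI1 UnI2 imageI)
      moreover have "QP q' t \<in> G3 (Inr ` q') ` {0..1}" using G3_Q[OF \<open>q' \<in> EQ\<close>] \<open>t \<in> {0..1}\<close> by simp
      ultimately show ?thesis unfolding S3_def by blast
    next
      case (cn a i)
      then obtain j where j: "j \<in> Q" "ht j = - ht i" using ht_sym by blast
      have "y = cone p1 p2 (ht j) (P2 a) s" using e y cn j by (simp add: refl3_cone)
      moreover have "{Inl a, Inr j} \<in> EW" using cn(1) j(1) unfolding EW_def by (intro UnI2) auto
      moreover have "cone p1 p2 (ht j) (P2 a) s \<in> G3 {Inl a, Inr j} ` {0..1}" using G3_cone e(2) by simp
      ultimately show ?thesis unfolding S3_def by blast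
    qed
  qed
qed

theorem achiral_W: "achirally_embeddable W EW"
  using achiral_from_emb[OF emb_W] refl3_image_eq[OF refl_S3] unfolding S3_def by simp

end

definition phi :: "(nat \<Rightarrow> real) \<Rightarrow> real \<times> real" where "phi x = (x 0, x 1)"

lemma phi_inj: "x \<in> topspace (Euclidean_space 2) \<Longrightarrow> y \<in> topspace (Euclidean_space 2) \<Longrightarrow> phi x = phi y \<Longrightarrow> x = y"
proof (rule ext)
  fix i assume a: "x \<in> topspace (Euclidean_space 2)" "y \<in> topspace (Euclidean_space 2)" "phi x = phi y"
  show "x i = y i"
  proof (cases "i < 2")
    case True
    hence "i = 0 \<or> i = 1" by auto
    thus ?thesis using a(3) by (auto simp: phi_def)
  next
    case False
    thus ?thesis using a(1,2) by (simp add: topspace_Euclidean_space)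
  qed
qed

lemma phi_inj_on: "inj_on phi (topspace (Euclidean_space 2))"
  using phi_inj by (meson inj_onI)

lemma pathin_E2:
  assumes "pathin (Euclidean_space 2) g"
  shows "continuous_on {0..1} (phi \<circ> g)" "g ` {0..1} \<subseteq> topspace (Euclidean_space 2)"
proof -
  have cm: "continuous_map (top_of_set {0..1}) (Euclidean_space 2) g" using assms by (simp add: pathin_def)
  hence "continuous_map (top_of_set {0..1}) (powertop_real UNIV) g"
    unfolding Euclidean_space_def continuous_map_in_subtopology by simp
  hence "\<And>i. continuous_map (top_of_set {0..1}) euclideanreal (\<lambda>t. g t i)"
    by (simp add: continuous_map_componentwise_UNIV)
  hence c: "\<And>i. continuous_on {0..1} (\<lambda>t. g t i)" by simp
  show "continuous_on {0..1} (phi \<circ> g)" unfolding phi_def o_def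
    by (intro continuous_on_Pair c)
  show "g ` {0..1} \<subseteq> topspace (Euclidean_space 2)"
    using continuous_map_image_subset_topspace[OF cm] by simp
qed

lemma planar_emb:
  assumes "graph_embedding (Euclidean_space 2) B EB pos gam"
  shows "emb B EB (phi \<circ> pos) (\<lambda>e. phi \<circ> gam e)"
proof -
  let ?T = "topspace (Euclidean_space 2)"
  have gd: "pos ` B \<subseteq> ?T \<and> inj_on pos B \<and>
     (\<forall>e\<in>EB. pathin (Euclidean_space 2) (gam e) \<and> inj_on (gam e) {0..1} \<and> {gam e 0, gam e 1} = pos ` e \<and>
             gam e ` {0<..<1} \<inter> pos ` B = {}) \<and>
     (\<forall>e\<in>EB. \<forall>e'\<in>EB. e \<noteq> e' \<longrightarrow> gam e ` {0<..<1} \<inter> gam e' ` {0..1} = {})"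
    using assms unfolding graph_embedding_def .
  have A: "pos ` B \<subseteq> ?T" "inj_on pos B" using gd by (simp_all only:)
  have Ed: "\<And>e. e \<in> EB \<Longrightarrow> pathin (Euclidean_space 2) (gam e) \<and> inj_on (gam e) {0..1} \<and> {gam e 0, gam e 1} = pos ` e \<and>
             gam e ` {0<..<1} \<inter> pos ` B = {}"
    using gd[THEN conjunct2, THEN conjunct2, THEN conjunct1] by (rule bspec)
  have Dj: "\<And>e e'. e \<in> EB \<Longrightarrow> e' \<in> EB \<Longrightarrow> e \<noteq> e' \<Longrightarrow> gam e ` {0<..<1} \<inter> gam e' ` {0..1} = {}"
    using gd[THEN conjunct2, THEN conjunct2, THEN conjunct2] by blast
  have TS: "\<And>e. e \<in> EB \<Longrightarrow> gam e ` {0..1} \<subseteq> ?T" using Ed pathin_E2(2) by blast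
  have TS': "\<And>e t. e \<in> EB \<Longrightarrow> t \<in> {0..1} \<Longrightarrow> gam e t \<in> ?T" using TS by blast
  have TSo: "\<And>e t. e \<in> EB \<Longrightarrow> t \<in> {0<..<1} \<Longrightarrow> gam e t \<in> ?T" using TS' by auto
  have TB: "\<And>v. v \<in> B \<Longrightarrow> pos v \<in> ?T" using A by blast
  show ?thesis unfolding emb_def
  proof (intro conjI ballI impI)
    show "inj_on (phi \<circ> pos) B"
    proof (rule inj_onI)
      fix x y assume xy: "x \<in> B" "y \<in> B" "(phi \<circ> pos) x = (phi \<circ> pos) y"
      hence "pos x = pos y" using phi_inj TB by simp
      thus "x = y" using A(2) xy by (simp add: inj_on_eq_iff)
    qed
  next
    fix e assume e: "e \<in> EB"
    show "continuous_on {0..1} (phi \<circ> gam e)" using Ed[OF e] pathin_E2(1) by blast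
    show "inj_on (phi \<circ> gam e) {0..1}"
    proof (rule inj_onI)
      fix x y assume xy: "x \<in> {0..1}" "y \<in> {0..1}" "(phi \<circ> gam e) x = (phi \<circ> gam e) y"
      hence "gam e x = gam e y" using phi_inj TS'[OF e] by simp
      moreover have "inj_on (gam e) {0..1}" using Ed[OF e] by blast
      ultimately show "x = y" using xy(1,2) by (meson inj_onD)
    qed
    show "{(phi \<circ> gam e) 0, (phi \<circ> gam e) 1} = (phi \<circ> pos) ` e"
    proof -
      have "phi ` {gam e 0, gam e 1} = phi ` pos ` e" using Ed[OF e] by simp
      thus ?thesis by (simp add: image_image)
    qed
    show "(phi \<circ> gam e) ` {0<..<1} \<inter> (phi \<circ> pos) ` B = {}"
    proof (rule equals0I)
      fix y assume "y \<in> (phi \<circ> gam e) ` {0<..<1} \<inter> (phi \<circ> pos) ` B"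
      then obtain t v where tv: "t \<in> {0<..<1}" "v \<in> B" "phi (gam e t) = phi (pos v)" by auto
      hence "gam e t = pos v" using phi_inj TSo[OF e] TB by blast
      thus False using Ed[OF e] tv by blast
    qed
  next
    fix e e' assume e: "e \<in> EB" "e' \<in> EB" "e \<noteq> e'"
    show "(phi \<circ> gam e) ` {0<..<1} \<inter> (phi \<circ> gam e') ` {0..1} = {}"
    proof (rule equals0I)
      fix y assume "y \<in> (phi \<circ> gam e) ` {0<..<1} \<inter> (phi \<circ> gam e') ` {0..1}"
      then obtain t s where ts: "t \<in> {0<..<1}" "s \<in> {0..1}" "phi (gam e t) = phi (gam e' s)" by auto
      hence "gam e t = gam e' s" using phi_inj TSo[OF e(1)] TS'[OF e(2)] by blast
      thus False using Dj[OF e] ts by blast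
    qed
  qed
qed

lemma cross_root:
  fixes a b :: "real \<times> real" and R t :: real
  assumes "a \<noteq> b" "fst a < R" "cross (fst a - R, snd a - t) (fst b - R, snd b - t) = 0"
  shows "t = - ((fst a - R) * snd b - snd a * (fst b - R)) / (fst b - fst a)"
proof -
  have ex: "cross (fst a - R, snd a - t) (fst b - R, snd b - t) =
        t * (fst b - fst a) + ((fst a - R) * snd b - snd a * (fst b - R))"
    by (simp add: cross_def algebra_simps)
  show ?thesis
  proof (cases "fst b = fst a")
    case True
    hence "cross (fst a - R, snd a - t) (fst b - R, snd b - t) = (fst a - R) * (snd b - snd a)"
      by (simp add: cross_def algebra_simps)
    moreover have "snd b \<noteq> snd a" using True assms(1) by (simp add: prod_eq_iff)
    ultimately show ?thesis using assms(2,3) by simp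
  next
    case False
    hence "fst b - fst a \<noteq> 0" by simp
    thus ?thesis using assms(3) ex by (simp add: field_simps)
  qed
qed

lemma choose_p:
  assumes E: "emb B EB P2 g2" and fB: "finite B" and fE: "finite EB"
  shows "\<exists>p1 p2. (p1, p2) \<notin> P2 ` B \<union> (\<Union>e\<in>EB. g2 e ` {0..1}) \<and>
      (p1 + 1, p2) \<notin> P2 ` B \<union> (\<Union>e\<in>EB. g2 e ` {0..1}) \<and>
      (\<forall>v\<in>B. snd (P2 v) \<noteq> p2) \<and>
      (\<forall>v\<in>B. \<forall>w\<in>B. v \<noteq> w \<longrightarrow>
          cross (fst (P2 v) - p1, snd (P2 v) - p2) (fst (P2 w) - p1, snd (P2 w) - p2) \<noteq> 0)"
proof -
  let ?G = "P2 ` B \<union> (\<Union>e\<in>EB. g2 e ` {0..1})"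
  have injP: "inj_on P2 B" using E unfolding emb_def by blast
  have "\<And>e. e \<in> EB \<Longrightarrow> continuous_on {0..1} (g2 e)" using E unfolding emb_def by blast
  hence "compact (\<Union>e\<in>EB. g2 e ` {0..1})"
    by (intro compact_UN fE compact_continuous_image) auto
  moreover have "compact (P2 ` B)" by (intro finite_imp_compact) (simp add: fB)
  ultimately have "compact ?G" by (intro compact_Un)
  hence "bounded ?G" by (rule compact_imp_bounded)
  hence "\<exists>M. \<forall>x\<in>?G. norm x \<le> M" by (simp only: bounded_iff)
  then obtain M where M0: "\<forall>x\<in>?G. norm x \<le> M" by (rule exE)
  have M: "\<And>x. x \<in> ?G \<Longrightarrow> norm x \<le> M" using M0 by (rule bspec)
  define R where "R = M + 1"
  have fstR: "\<And>x. x \<in> ?G \<Longrightarrow> fst x < R"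
  proof -
    fix x :: "real \<times> real" assume "x \<in> ?G"
    hence "norm x \<le> M" by (rule M)
    moreover have "fst x \<le> norm x"
      using norm_fst_le[of "fst x" "snd x"] by simp
    ultimately show "fst x < R" unfolding R_def by simp
  qed
  define t0 where "t0 = (\<lambda>(v, w). - ((fst (P2 v) - R) * snd (P2 w) - snd (P2 v) * (fst (P2 w) - R)) / (fst (P2 w) - fst (P2 v)))"
  let ?T = "snd ` P2 ` B \<union> t0 ` (B \<times> B)"
  have "finite ?T" using fB by simp
  then obtain t where t: "t \<notin> ?T" using ex_new_if_finite[OF infinite_UNIV_char_0] by blast
  have c1: "(R, t) \<notin> ?G"
  proof
    assume "(R, t) \<in> ?G" hence "fst (R, t) < R" by (rule fstR) thus False by simp
  qed
  have c2: "(R + 1, t) \<notin> ?G"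
  proof
    assume "(R + 1, t) \<in> ?G" hence "fst (R + 1, t) < R" by (rule fstR) thus False by simp
  qed
  have c3: "\<forall>v\<in>B. snd (P2 v) \<noteq> t" using t by (metis UnI1 image_eqI)
  have c4: "\<forall>v\<in>B. \<forall>w\<in>B. v \<noteq> w \<longrightarrow>
          cross (fst (P2 v) - R, snd (P2 v) - t) (fst (P2 w) - R, snd (P2 w) - t) \<noteq> 0"
  proof (intro ballI impI notI)
    fix v w assume vw: "v \<in> B" "w \<in> B" "v \<noteq> w"
      and c: "cross (fst (P2 v) - R, snd (P2 v) - t) (fst (P2 w) - R, snd (P2 w) - t) = 0"
    have "P2 v \<noteq> P2 w" using injP vw by (meson inj_onD)
    moreover have "fst (P2 v) < R" using fstR vw by blast
    ultimately have "t = t0 (v, w)" using cross_root[OF _ _ c] unfolding t0_def by simp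
    thus False using t vw by blast
  qed
  show ?thesis using c1 c2 c3 c4 by blast
qed

definition qcfg :: "nat set \<Rightarrow> nat set set \<Rightarrow> (nat \<Rightarrow> real) \<Rightarrow> (real \<Rightarrow> real \<Rightarrow> nat set \<Rightarrow> real \<Rightarrow> real \<times> real \<times> real) \<Rightarrow> bool" where
  "qcfg Q EQ ht QPf \<longleftrightarrow> inj_on ht Q \<and> (\<forall>i\<in>Q. ht i \<noteq> 0) \<and> (\<forall>i\<in>Q. \<exists>j\<in>Q. ht j = - ht i) \<and>
     (\<forall>qq\<in>EQ. qq \<subseteq> Q \<and> qq \<noteq> {}) \<and>
     (\<forall>p1 p2.
       (\<forall>qq\<in>EQ. continuous_on {0..1} (QPf p1 p2 qq) \<and> inj_on (QPf p1 p2 qq) {0..1} \<and>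
               {QPf p1 p2 qq 0, QPf p1 p2 qq 1} = (\<lambda>i. (p1, p2, ht i)) ` qq) \<and>
       (\<forall>qq\<in>EQ. \<forall>t\<in>{0..1}. \<forall>x y z. QPf p1 p2 qq t = (x, y, z) \<longrightarrow> y = p2 \<and> (z = 0 \<longrightarrow> x = p1 \<or> x = p1 + 1)) \<and>
       (\<forall>qq\<in>EQ. \<forall>t\<in>{0<..<1}. \<forall>i\<in>Q. QPf p1 p2 qq t \<noteq> (p1, p2, ht i)) \<and>
       (\<forall>qq\<in>EQ. \<forall>qq'\<in>EQ. qq \<noteq> qq' \<longrightarrow> QPf p1 p2 qq ` {0<..<1} \<inter> QPf p1 p2 qq' ` {0..1} = {}) \<and>
       refl3 ` (\<Union>qq\<in>EQ. QPf p1 p2 qq ` {0..1}) \<subseteq> (\<Union>qq\<in>EQ. QPf p1 p2 qq ` {0..1}))"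

lemma simple_graph_facts:
  assumes "simple_graph V E"
  shows "finite V" "finite E" "\<And>e. e \<in> E \<Longrightarrow> e \<subseteq> V"
proof -
  have sub: "E \<subseteq> {{a, b} | a b. a \<in> V \<and> b \<in> V \<and> a \<noteq> b}" and fV: "finite V"
    using assms unfolding simple_graph_def by auto
  show "finite V" by (rule fV)
  show eV: "\<And>e. e \<in> E \<Longrightarrow> e \<subseteq> V" using sub by blast
  have "E \<subseteq> Pow V" using eV by blast
  thus "finite E" using fV by (meson finite_Pow_iff finite_subset)
qed

lemma general:
  assumes ge: "graph_embedding (Euclidean_space 2) B EB pos gam" and sg: "simple_graph B EB"
    and B0: "B0 \<subseteq> B" and qc: "qcfg Q EQ ht QPf"
  shows "achirally_embeddable (Inl ` B \<union> Inr ` Q)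
           (image Inl ` EB \<union> image Inr ` EQ \<union> {{Inl a, Inr b} | a b. a \<in> B0 \<and> b \<in> Q})"
proof -
  have E2: "emb B EB (phi \<circ> pos) (\<lambda>e. phi \<circ> gam e)" by (rule planar_emb[OF ge])
  obtain p1 p2 where p:
    "(p1, p2) \<notin> (phi \<circ> pos) ` B \<union> (\<Union>e\<in>EB. (phi \<circ> gam e) ` {0..1})"
    "(p1 + 1, p2) \<notin> (phi \<circ> pos) ` B \<union> (\<Union>e\<in>EB. (phi \<circ> gam e) ` {0..1})"
    "\<forall>v\<in>B. snd ((phi \<circ> pos) v) \<noteq> p2"
    "\<forall>v\<in>B. \<forall>w\<in>B. v \<noteq> w \<longrightarrow>
          cross (fst ((phi \<circ> pos) v) - p1, snd ((phi \<circ> pos) v) - p2) (fst ((phi \<circ> pos) w) - p1, snd ((phi \<circ> pos) w) - p2) \<noteq> 0"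
    using choose_p[OF E2 simple_graph_facts(1,2)[OF sg]] by (elim exE conjE) (rule that; assumption)
  note qcu = qc[unfolded qcfg_def]
  note qf = qcu[THEN conjunct1] qcu[THEN conjunct2, THEN conjunct1] qcu[THEN conjunct2, THEN conjunct2, THEN conjunct1]
       qcu[THEN conjunct2, THEN conjunct2, THEN conjunct2, THEN conjunct1]
  have qp: "(\<forall>qq\<in>EQ. continuous_on {0..1} (QPf p1 p2 qq) \<and> inj_on (QPf p1 p2 qq) {0..1} \<and>
               {QPf p1 p2 qq 0, QPf p1 p2 qq 1} = (\<lambda>i. (p1, p2, ht i)) ` qq) \<and>
       (\<forall>qq\<in>EQ. \<forall>t\<in>{0..1}. \<forall>x y z. QPf p1 p2 qq t = (x, y, z) \<longrightarrow> y = p2 \<and> (z = 0 \<longrightarrow> x = p1 \<or> x = p1 + 1)) \<and>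
       (\<forall>qq\<in>EQ. \<forall>t\<in>{0<..<1}. \<forall>i\<in>Q. QPf p1 p2 qq t \<noteq> (p1, p2, ht i)) \<and>
       (\<forall>qq\<in>EQ. \<forall>qq'\<in>EQ. qq \<noteq> qq' \<longrightarrow> QPf p1 p2 qq ` {0<..<1} \<inter> QPf p1 p2 qq' ` {0..1} = {}) \<and>
       refl3 ` (\<Union>qq\<in>EQ. QPf p1 p2 qq ` {0..1}) \<subseteq> (\<Union>qq\<in>EQ. QPf p1 p2 qq ` {0..1})"
    using qcu[THEN conjunct2, THEN conjunct2, THEN conjunct2, THEN conjunct2, THEN spec, THEN spec] .
  interpret c: cfg B EB "phi \<circ> pos" "\<lambda>e. phi \<circ> gam e" B0 Q EQ ht "QPf p1 p2" p1 p2
  proof (unfold_locales)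
    show "emb B EB (phi \<circ> pos) (\<lambda>e. phi \<circ> gam e)" by (rule E2)
    show "\<And>e. e \<in> EB \<Longrightarrow> e \<subseteq> B" by (rule simple_graph_facts(3)[OF sg])
    show "B0 \<subseteq> B" by (rule B0)
    show "inj_on ht Q" by (rule qf(1))
    show "\<And>i. i \<in> Q \<Longrightarrow> ht i \<noteq> 0" using qf(2) by blast
    show "\<And>i. i \<in> Q \<Longrightarrow> \<exists>j\<in>Q. ht j = - ht i" using qf(3) by blast
    show "\<And>qq. qq \<in> EQ \<Longrightarrow> qq \<subseteq> Q \<and> qq \<noteq> {}" using qf(4) by blast
    show "\<And>qq. qq \<in> EQ \<Longrightarrow> continuous_on {0..1} (QPf p1 p2 qq) \<and> inj_on (QPf p1 p2 qq) {0..1} \<and>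
               {QPf p1 p2 qq 0, QPf p1 p2 qq 1} = (\<lambda>i. (p1, p2, ht i)) ` qq"
      using qp[THEN conjunct1] by blast
    show "\<And>qq t x y z. qq \<in> EQ \<Longrightarrow> t \<in> {0..1} \<Longrightarrow> QPf p1 p2 qq t = (x, y, z) \<Longrightarrow>
               y = p2 \<and> (z = 0 \<longrightarrow> x = p1 \<or> x = p1 + 1)"
      using qp[THEN conjunct2, THEN conjunct1] by blast
    show "\<And>qq t i. qq \<in> EQ \<Longrightarrow> t \<in> {0<..<1} \<Longrightarrow> i \<in> Q \<Longrightarrow> QPf p1 p2 qq t \<noteq> (p1, p2, ht i)"
      using qp[THEN conjunct2, THEN conjunct2, THEN conjunct1] by blast
    show "\<And>qq qq'. qq \<in> EQ \<Longrightarrow> qq' \<in> EQ \<Longrightarrow> qq \<noteq> qq' \<Longrightarrow> QPf p1 p2 qq ` {0<..<1} \<inter> QPf p1 p2 qq' ` {0..1} = {}"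
      using qp[THEN conjunct2, THEN conjunct2, THEN conjunct2, THEN conjunct1] by blast
    show "refl3 ` (\<Union>qq\<in>EQ. QPf p1 p2 qq ` {0..1}) \<subseteq> (\<Union>qq\<in>EQ. QPf p1 p2 qq ` {0..1})"
      using qp[THEN conjunct2, THEN conjunct2, THEN conjunct2, THEN conjunct2] by blast
    show "(p1, p2) \<notin> (phi \<circ> pos) ` B \<union> (\<Union>e\<in>EB. (phi \<circ> gam e) ` {0..1})" by (rule p(1))
    show "(p1 + 1, p2) \<notin> (phi \<circ> pos) ` B \<union> (\<Union>e\<in>EB. (phi \<circ> gam e) ` {0..1})" by (rule p(2))
    show "\<And>v. v \<in> B \<Longrightarrow> snd ((phi \<circ> pos) v) \<noteq> p2" using p(3) by (rule bspec)
    show "\<And>v w. v \<in> B \<Longrightarrow> w \<in> B \<Longrightarrow> v \<noteq> w \<Longrightarrow>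
          cross (fst ((phi \<circ> pos) v) - p1, snd ((phi \<circ> pos) v) - p2) (fst ((phi \<circ> pos) w) - p1, snd ((phi \<circ> pos) w) - p2) \<noteq> 0"
      using p(4) by blast
  qed
  show ?thesis using c.achiral_W unfolding c.W_def c.EW_def .
qed

definition htE :: "nat \<Rightarrow> real" where
  "htE i = (if even i then real (i div 2) + 1 else - (real (i div 2) + 1))"

lemma htE_nz: "htE i \<noteq> 0"
  unfolding htE_def by (simp add: add_nonneg_pos)

lemma htE_inj: "inj htE"
proof (rule injI)
  fix i j assume h: "htE i = htE j"
  have pos: "\<And>k. 0 < real (k div 2) + 1" by (simp add: add_nonneg_pos)
  have "even i = even j"
  proof (rule ccontr)
    assume "even i \<noteq> even j"
    thus False using h pos[of i] pos[of j] unfolding htE_def by (auto split: if_splits)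
  qed
  moreover have "i div 2 = j div 2" using h \<open>even i = even j\<close> unfolding htE_def by (auto split: if_splits)
  ultimately show "i = j" by (metis div_mult_mod_eq mod2_eq_if)
qed

lemma htE_sym: "even n \<Longrightarrow> i < n \<Longrightarrow> \<exists>j\<in>{..<n}. htE j = - htE i"
proof (cases "even i")
  case True
  assume n: "even n" "i < n"
  have "i + 1 < n" using n True by (metis Suc_lessI add.commute plus_1_eq_Suc even_Suc)
  moreover have "htE (i + 1) = - htE i" using True unfolding htE_def by simp
  ultimately show ?thesis by blast
next
  case False
  assume n: "even n" "i < n"
  then obtain m where m: "i = Suc m" using False by (cases i) auto
  hence "even m" using False by simp
  have "m < n" using n m by simp
  moreover have "htE m = - htE i" using m \<open>even m\<close> unfolding htE_def by simp
  ultimately show ?thesis by blast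
qed

lemma qcfg_even: "even n \<Longrightarrow> qcfg {..<n} {} htE (\<lambda>_ _ _ _. (0, 0, 0))"
  unfolding qcfg_def using inj_on_subset[OF htE_inj] htE_nz htE_sym
  by auto

definition QP11 :: "real \<Rightarrow> real \<Rightarrow> nat set \<Rightarrow> real \<Rightarrow> real \<times> real \<times> real" where
  "QP11 p1 p2 qq t = (p1, p2, 1 - 2 * t)"

lemma qcfg_K11: "qcfg {0, 1} {{0, 1}} htE QP11"
  unfolding qcfg_def
proof (intro conjI allI ballI)
  show "inj_on htE {0, 1}" by (rule inj_on_subset[OF htE_inj]) simp
  fix p1 p2 :: real
  show "continuous_on {0..1} (QP11 p1 p2 qq)" for qq unfolding QP11_def by (intro continuous_intros)
  show "inj_on (QP11 p1 p2 qq) {0..1}" for qq by (auto simp: inj_on_def QP11_def)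
  show "{QP11 p1 p2 qq 0, QP11 p1 p2 qq 1} = (\<lambda>i. (p1, p2, htE i)) ` qq" if "qq \<in> {{0, 1}}" for qq
    using that by (auto simp: QP11_def htE_def)
  show "\<And>x y z. QP11 p1 p2 qq t = (x, y, z) \<longrightarrow> y = p2 \<and> (z = 0 \<longrightarrow> x = p1 \<or> x = p1 + 1)" for qq t
    by (auto simp: QP11_def)
  show "QP11 p1 p2 qq t \<noteq> (p1, p2, htE i)" if "t \<in> {0<..<1}" "i \<in> {0, 1}" for qq t i
    using that by (auto simp: QP11_def htE_def)
  show "refl3 ` (\<Union>qq\<in>{{0, 1}}. QP11 p1 p2 qq ` {0..1}) \<subseteq> (\<Union>qq\<in>{{0, 1}}. QP11 p1 p2 qq ` {0..1})"
  proof
    fix y assume "y \<in> refl3 ` (\<Union>qq\<in>{{0::nat, 1}}. QP11 p1 p2 qq ` {0..1})"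
    then obtain t where t: "t \<in> {0..1}" "y = refl3 (QP11 p1 p2 {0,1} t)" by auto
    hence "y = QP11 p1 p2 {0,1} (1 - t)" by (simp add: refl3_def QP11_def)
    moreover have "1 - t \<in> {0..(1::real)}" using t by auto
    ultimately show "y \<in> (\<Union>qq\<in>{{0::nat, 1}}. QP11 p1 p2 qq ` {0..1})" by blast
  qed
qed (auto simp: htE_def)

definition htK :: "nat \<Rightarrow> real" where
  "htK i = (if i = 0 then 1 else if i = 1 then -2 else if i = 2 then -1 else 2)"

definition QPK :: "real \<Rightarrow> real \<Rightarrow> nat set \<Rightarrow> real \<Rightarrow> real \<times> real \<times> real" where
  "QPK p1 p2 qq t = (if qq = {0, 2} then (p1, p2, 1 - 2 * t) else if qq = {0, 3} then (p1, p2, 1 + t)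
     else if qq = {1, 2} then (p1, p2, t - 2) else (p1 + (1 - \<bar>1 - 2 * t\<bar>), p2, 2 - 4 * t))"

lemma QPK_02: "QPK p1 p2 {0, 2} t = (p1, p2, 1 - 2 * t)"
  and QPK_03: "QPK p1 p2 {0, 3} t = (p1, p2, 1 + t)"
  and QPK_12: "QPK p1 p2 {1, 2} t = (p1, p2, t - 2)"
  and QPK_13: "QPK p1 p2 {1, 3} t = (p1 + (1 - \<bar>1 - 2 * t\<bar>), p2, 2 - 4 * t)"
  by (simp_all add: QPK_def doubleton_eq_iff)

lemma QPKf: "QPK p1 p2 {0, 2} = (\<lambda>t. (p1, p2, 1 - 2 * t))"
  "QPK p1 p2 {0, 3} = (\<lambda>t. (p1, p2, 1 + t))"
  "QPK p1 p2 {1, 2} = (\<lambda>t. (p1, p2, t - 2))"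
  "QPK p1 p2 {1, 3} = (\<lambda>t. (p1 + (1 - \<bar>1 - 2 * t\<bar>), p2, 2 - 4 * t))"
  "QPK p1 p2 {Suc 0, 2} = (\<lambda>t. (p1, p2, t - 2))"
  "QPK p1 p2 {Suc 0, 3} = (\<lambda>t. (p1 + (1 - \<bar>1 - 2 * t\<bar>), p2, 2 - 4 * t))"
  by (simp_all add: fun_eq_iff QPK_02 QPK_03 QPK_12 QPK_13 flip: One_nat_def)

lemma K22_E_eq: "K22_E = {{0, 2}, {0, 3}, {1, 2}, {1, 3}}" by (simp add: K22_E_def)

lemma K22_ball: "(\<forall>qq\<in>K22_E. P qq) \<longleftrightarrow> P {0, 2} \<and> P {0, 3} \<and> P {1, 2} \<and> P {1, 3}"
  by (simp add: K22_E_def)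

lemma K22_ne: "{0::nat, 2} \<noteq> {0, 3}" "{0::nat, 2} \<noteq> {1, 2}" "{0::nat, 2} \<noteq> {1, 3}"
  "{0::nat, 3} \<noteq> {1, 2}" "{0::nat, 3} \<noteq> {1, 3}" "{1::nat, 2} \<noteq> {1, 3}"
  by (simp_all add: doubleton_eq_iff)

lemma bent_inj: "inj_on (\<lambda>t. (p1 + (1 - \<bar>1 - 2 * t\<bar>), p2, 2 - 4 * (t::real))) S"
  by (auto simp: inj_on_def)

lemma K22_disj_pt:
  assumes "qq \<in> K22_E" "qq' \<in> K22_E" "qq \<noteq> qq'" "s \<in> {0<..<1}" "t \<in> {0..1}"
  shows "QPK p1 p2 qq s \<noteq> QPK p1 p2 qq' t"
  using assms unfolding K22_E_eq
  by (auto simp: QPKf K22_ne K22_ne[symmetric] abs_if split: if_splits)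

lemma qcfg_K22: "qcfg K22_V K22_E htK QPK"
  unfolding qcfg_def
proof (intro conjI allI)
  show "inj_on htK K22_V" by (auto simp: inj_on_def htK_def K22_V_def)
  show "\<forall>i\<in>K22_V. htK i \<noteq> 0" by (auto simp: htK_def K22_V_def)
  show "\<forall>i\<in>K22_V. \<exists>j\<in>K22_V. htK j = - htK i"
    unfolding K22_V_def htK_def by auto
  show "\<forall>qq\<in>K22_E. qq \<subseteq> K22_V \<and> qq \<noteq> {}" by (auto simp: K22_E_def K22_V_def)
  fix p1 p2 :: real
  show "\<forall>qq\<in>K22_E. continuous_on {0..1} (QPK p1 p2 qq) \<and> inj_on (QPK p1 p2 qq) {0..1} \<and>
               {QPK p1 p2 qq 0, QPK p1 p2 qq 1} = (\<lambda>i. (p1, p2, htK i)) ` qq"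
    unfolding K22_ball
    by (simp add: QPKf htK_def insert_commute)
       (intro conjI continuous_intros; auto simp: inj_on_def)
  show "\<forall>qq\<in>K22_E. \<forall>t\<in>{0..1}. \<forall>x y z. QPK p1 p2 qq t = (x, y, z) \<longrightarrow> y = p2 \<and> (z = 0 \<longrightarrow> x = p1 \<or> x = p1 + 1)"
    unfolding K22_ball by (auto simp: QPKf)
  show "\<forall>qq\<in>K22_E. \<forall>t\<in>{0<..<1}. \<forall>i\<in>K22_V. QPK p1 p2 qq t \<noteq> (p1, p2, htK i)"
    unfolding K22_ball K22_V_def by (auto simp: QPKf htK_def abs_if)
  show "\<forall>qq\<in>K22_E. \<forall>qq'\<in>K22_E. qq \<noteq> qq' \<longrightarrow> QPK p1 p2 qq ` {0<..<1} \<inter> QPK p1 p2 qq' ` {0..1} = {}"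
  proof (intro ballI impI equals0I)
    fix qq qq' y assume a: "qq \<in> K22_E" "qq' \<in> K22_E" "qq \<noteq> qq'"
      and "y \<in> QPK p1 p2 qq ` {0<..<1} \<inter> QPK p1 p2 qq' ` {0..1}"
    then obtain s t where "s \<in> {0<..<1}" "t \<in> {0..1}" "QPK p1 p2 qq s = QPK p1 p2 qq' t" by blast
    thus False using K22_disj_pt[OF a] by blast
  qed
  show "refl3 ` (\<Union>qq\<in>K22_E. QPK p1 p2 qq ` {0..1}) \<subseteq> (\<Union>qq\<in>K22_E. QPK p1 p2 qq ` {0..1})"
  proof
    fix y assume "y \<in> refl3 ` (\<Union>qq\<in>K22_E. QPK p1 p2 qq ` {0..1})"
    then obtain qq t where qt: "qq \<in> K22_E" "t \<in> {0..1}" "y = refl3 (QPK p1 p2 qq t)" by auto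
    have t1: "1 - t \<in> {0..1}" using qt(2) by auto
    have "\<exists>qq'\<in>K22_E. y = QPK p1 p2 qq' (1 - t)"
      using qt(1,3) unfolding K22_E_eq
      by (auto simp: QPKf refl3_def abs_minus_commute)
    thus "y \<in> (\<Union>qq\<in>K22_E. QPK p1 p2 qq ` {0..1})" using t1 by blast
  qed
qed

lemma achiral_iso:
  assumes A: "achirally_embeddable V E" and inj: "inj_on f V" and sub: "\<And>e. e \<in> E \<Longrightarrow> e \<subseteq> V"
  shows "achirally_embeddable (f ` V) ((image f) ` E)"
proof -
  obtain pos gam h where ge: "graph_embedding (nsphere 3) V E pos gam"
    and hm: "homeomorphic_map (nsphere 3) (nsphere 3) h" and dg: "Brouwer_degree2 3 h = -1"
    and im: "h ` embedding_image V E pos gam = embedding_image V E pos gam"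
    using A unfolding achirally_embeddable_def by blast
  define g where "g = inv_into V f"
  define pos' where "pos' = pos \<circ> g"
  define gam' where "gam' = (\<lambda>e'. gam (g ` e'))"
  have gf: "\<And>x. x \<in> V \<Longrightarrow> g (f x) = x" unfolding g_def using inj by (simp add: inv_into_f_f)
  have gfA: "\<And>A. A \<subseteq> V \<Longrightarrow> g ` f ` A = A"
  proof -
    fix A assume "A \<subseteq> V"
    hence "g ` f ` A = (\<lambda>x. x) ` A" unfolding image_image using gf by (intro image_cong) auto
    thus "g ` f ` A = A" by simp
  qed
  have posA: "\<And>A. A \<subseteq> V \<Longrightarrow> pos' ` f ` A = pos ` A"
  proof -
    fix A assume A: "A \<subseteq> V"
    have "pos' ` f ` A = pos ` (g ` f ` A)" unfolding pos'_def by (simp add: image_image)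
    thus "pos' ` f ` A = pos ` A" using gfA[OF A] by simp
  qed
  have gamE: "\<And>e. e \<in> E \<Longrightarrow> gam' (f ` e) = gam e" unfolding gam'_def using gfA sub by simp
  have gd: "pos ` V \<subseteq> topspace (nsphere 3) \<and> inj_on pos V \<and>
     (\<forall>e\<in>E. pathin (nsphere 3) (gam e) \<and> inj_on (gam e) {0..1} \<and> {gam e 0, gam e 1} = pos ` e \<and>
             gam e ` {0<..<1} \<inter> pos ` V = {}) \<and>
     (\<forall>e\<in>E. \<forall>e'\<in>E. e \<noteq> e' \<longrightarrow> gam e ` {0<..<1} \<inter> gam e' ` {0..1} = {})"
    using ge unfolding graph_embedding_def .
  have ge': "graph_embedding (nsphere 3) (f ` V) ((image f) ` E) pos' gam'"
    unfolding graph_embedding_def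
  proof (intro conjI ballI impI)
    show "pos' ` f ` V \<subseteq> topspace (nsphere 3)" using gd posA by simp
    show "inj_on pos' (f ` V)"
    proof (rule inj_onI)
      fix x y assume xy: "x \<in> f ` V" "y \<in> f ` V" "pos' x = pos' y"
      then obtain a b where ab: "a \<in> V" "b \<in> V" "x = f a" "y = f b" by blast
      hence "pos a = pos b" using xy(3) gf unfolding pos'_def by simp
      hence "a = b" using gd ab by (meson inj_onD)
      thus "x = y" using ab by simp
    qed
  next
    fix e' assume "e' \<in> (image f) ` E"
    then obtain e where e: "e \<in> E" "e' = f ` e" by blast
    have P: "pathin (nsphere 3) (gam e) \<and> inj_on (gam e) {0..1} \<and> {gam e 0, gam e 1} = pos ` e \<and>
             gam e ` {0<..<1} \<inter> pos ` V = {}" using gd e(1) by blast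
    show "pathin (nsphere 3) (gam' e')" using P e gamE by simp
    show "inj_on (gam' e') {0..1}" using P e gamE by simp
    show "{gam' e' 0, gam' e' 1} = pos' ` e'" using P e gamE posA sub by simp
    show "gam' e' ` {0<..<1} \<inter> pos' ` f ` V = {}" using P e gamE posA by simp
  next
    fix e1 e2 assume "e1 \<in> (image f) ` E" "e2 \<in> (image f) ` E" "e1 \<noteq> e2"
    then obtain a b where ab: "a \<in> E" "b \<in> E" "e1 = f ` a" "e2 = f ` b" "a \<noteq> b" by blast
    show "gam' e1 ` {0<..<1} \<inter> gam' e2 ` {0..1} = {}" using gd ab gamE by simp
  qed
  have "embedding_image (f ` V) ((image f) ` E) pos' gam' = embedding_image V E pos gam"
  proof -
    have "(\<Union>e'\<in>(image f) ` E. gam' e' ` {0..1}) = (\<Union>e\<in>E. gam' (f ` e) ` {0..1})" by simp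
    also have "\<dots> = (\<Union>e\<in>E. gam e ` {0..1})" using gamE by simp
    finally show ?thesis unfolding embedding_image_def using posA by simp
  qed
  thus ?thesis unfolding achirally_embeddable_def using ge' hm dg im by metis
qed

definition relab :: "(('a + unit) + nat) \<Rightarrow> 'a + nat" where
  "relab x = (case x of Inl (Inl v) \<Rightarrow> Inl v | Inl (Inr u) \<Rightarrow> Inr 0 | Inr i \<Rightarrow> Inr (Suc i))"

lemma relab_simps [simp]: "relab (Inl (Inl v)) = Inl v" "relab (Inl (Inr u)) = Inr 0" "relab (Inr i) = Inr (Suc i)"
  by (simp_all add: relab_def)

lemma relab_inj: "inj relab"
proof (rule injI)
  fix x y :: "('a + unit) + nat" assume "relab x = relab y"
  thus "x = y"
    by (cases x rule: sum.exhaust; cases y rule: sum.exhaust) (auto split: sum.splits simp: relab_def)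
qed

lemma join_simple:
  assumes "simple_graph V E"
  shows "simple_graph (join_V V {()}) (join_E V E {()} {})"
proof -
  have fV: "finite V" and sub: "E \<subseteq> {{a, b} | a b. a \<in> V \<and> b \<in> V \<and> a \<noteq> b}"
    using assms unfolding simple_graph_def by auto
  show ?thesis unfolding simple_graph_def join_V_def join_E_def
  proof (intro conjI subsetI)
    show "finite (Inl ` V \<union> Inr ` {()})" using fV by simp
  next
    fix e assume "e \<in> image Inl ` E \<union> image Inr ` {} \<union> {{Inl a, Inr b} |a b. a \<in> V \<and> b \<in> {()}}"
    then consider (a) e0 where "e0 \<in> E" "e = Inl ` e0" | (b) a where "a \<in> V" "e = {Inl a, Inr ()}" by blast
    thus "e \<in> {{a, b} |a b. a \<in> Inl ` V \<union> Inr ` {()} \<and> b \<in> Inl ` V \<union> Inr ` {()} \<and> a \<noteq> b}"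
    proof cases
      case a
      then obtain x y where "e0 = {x, y}" "x \<in> V" "y \<in> V" "x \<noteq> y" using sub by blast
      thus ?thesis using a by auto
    next
      case b
      thus ?thesis by auto
    qed
  qed
qed

lemma relab_V:
  assumes "0 < n"
  shows "relab ` (Inl ` join_V V {()} \<union> Inr ` {..<n - 1}) = join_V V {..<n}"
proof -
  have "{..<n} = insert 0 (Suc ` {..<n - 1})"
  proof
    show "{..<n} \<subseteq> insert 0 (Suc ` {..<n - 1})"
    proof
      fix i assume "i \<in> {..<n}"
      thus "i \<in> insert 0 (Suc ` {..<n - 1})" by (cases i) auto
    qed
    show "insert 0 (Suc ` {..<n - 1}) \<subseteq> {..<n}" using assms by auto
  qed
  moreover have "relab ` (Inl ` join_V V {()} \<union> Inr ` {..<n - 1}) = Inl ` V \<union> Inr ` insert 0 (Suc ` {..<n - 1})"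
    unfolding join_V_def by (auto simp: image_Un image_image)
  ultimately show ?thesis unfolding join_V_def by simp
qed

lemma relab_E:
  assumes "0 < n"
  shows "(image relab) ` (image Inl ` join_E V E {()} {} \<union> image Inr ` {} \<union> {{Inl a, Inr b} | a b. a \<in> Inl ` V \<and> b \<in> {..<n - 1}})
         = join_E V E {..<n} {}"
proof -
  have A: "(image relab) ` (image Inl ` image Inl ` E) = image Inl ` E"
    by (auto simp: image_image)
  have B: "(image relab) ` (image Inl ` {{Inl a, Inr b} | a b. a \<in> V \<and> b \<in> {()}}) = {{Inl a, Inr 0} | a. a \<in> V}" (is "?L = ?R")
  proof
    show "?L \<subseteq> ?R" by auto
    show "?R \<subseteq> ?L"
    proof
      fix e assume "e \<in> ?R"
      then obtain a where a: "a \<in> V" "e = {Inl a, Inr 0}" by blast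
      hence "e = image relab (image Inl {Inl a, Inr ()})" by simp
      moreover have "{Inl a, Inr ()} \<in> {{Inl a, Inr b} | a b. a \<in> V \<and> b \<in> {()}}" using a by blast
      ultimately show "e \<in> ?L" by blast
    qed
  qed
  have C: "(image relab) ` {{Inl a, Inr b} | a b. a \<in> Inl ` V \<and> b \<in> {..<n - 1}} = {{Inl a, Inr (Suc b)} | a b. a \<in> V \<and> b < n - 1}" (is "?L = ?R")
  proof
    show "?L \<subseteq> ?R"
    proof
      fix e assume "e \<in> ?L"
      then obtain a b where ab: "a \<in> V" "b < n - 1" "e = image relab {Inl (Inl a), Inr b}" by blast
      hence "e = {Inl a, Inr (Suc b)}" by simp
      thus "e \<in> ?R" using ab by blast
    qed
    show "?R \<subseteq> ?L"
    proof
      fix e assume "e \<in> ?R"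
      then obtain a b where a: "a \<in> V" "b < n - 1" "e = {Inl a, Inr (Suc b)}" by blast
      hence "e = image relab {Inl (Inl a), Inr b}" by simp
      moreover have "{Inl (Inl a), Inr b} \<in> {{Inl a, Inr b} | a b. a \<in> Inl ` V \<and> b \<in> {..<n - 1}}" using a by blast
      ultimately show "e \<in> ?L" by blast
    qed
  qed
  have D: "{{Inl a, Inr 0} | a. a \<in> V} \<union> {{Inl a, Inr (Suc b)} | a b. a \<in> V \<and> b < n - 1}
      = {{Inl a, Inr b} | a b. a \<in> V \<and> b \<in> {..<n}}" (is "?L = ?R")
  proof
    show "?L \<subseteq> ?R"
    proof
      fix e assume "e \<in> ?L"
      then consider (z) a where "a \<in> V" "e = {Inl a, Inr 0}" | (s) a b where "a \<in> V" "b < n - 1" "e = {Inl a, Inr (Suc b)}" by blast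
      thus "e \<in> ?R"
      proof cases
        case z thus ?thesis using assms by blast
      next
        case s
        hence "Suc b \<in> {..<n}" by simp
        thus ?thesis using s by blast
      qed
    qed
    show "?R \<subseteq> ?L"
    proof
      fix e assume "e \<in> ?R"
      then obtain a b where ab: "e = {Inl a, Inr b}" "a \<in> V" "b < n" by blast
      show "e \<in> ?L"
      proof (cases b)
        case 0 thus ?thesis using ab by blast
      next
        case (Suc c)
        hence "c < n - 1" using ab by simp
        hence "{Inl a, Inr (Suc c)} \<in> {{Inl a, Inr (Suc b)} | a b. a \<in> V \<and> b < n - 1}" using ab by blast
        thus ?thesis using ab Suc by blast
      qed
    qed
  qed
  have "(image relab) ` (image Inl ` join_E V E {()} {} \<union> image Inr ` {} \<union> {{Inl a, Inr b} | a b. a \<in> Inl ` V \<and> b \<in> {..<n - 1}})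
      = (image relab) ` (image Inl ` image Inl ` E) \<union> (image relab) ` (image Inl ` {{Inl a, Inr b} | a b. a \<in> V \<and> b \<in> {()}})
        \<union> (image relab) ` {{Inl a, Inr b} | a b. a \<in> Inl ` V \<and> b \<in> {..<n - 1}}"
    by (simp only: join_E_def image_Un image_empty Un_empty_right)
  also have "\<dots> = image Inl ` E \<union> ({{Inl a, Inr 0} | a. a \<in> V} \<union> {{Inl a, Inr (Suc b)} | a b. a \<in> V \<and> b < n - 1})"
    by (simp only: A B C Un_assoc)
  also have "\<dots> = join_E V E {..<n} {}" unfolding D join_E_def by simp
  finally show ?thesis .
qed

theorem theorem3:
  fixes V :: "'a set" and E :: "'a set set" and VQ :: "nat set" and EQ :: "nat set set"
  assumes "simple_graph V E"
    and "(planar V E \<and>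
            ((VQ = K11_V \<and> EQ = K11_E) \<or> (VQ = K22_V \<and> EQ = K22_E) \<or>
             (\<exists>n. even n \<and> 0 < n \<and> VQ = {..<n} \<and> EQ = {})))
       \<or> (outerplanar V E \<and> (\<exists>n. odd n \<and> VQ = {..<n} \<and> EQ = {}))"
  shows "achirally_embeddable (join_V V VQ) (join_E V E VQ EQ)"
proof -
  from assms(2) consider
      (k11) "planar V E" "VQ = K11_V" "EQ = K11_E"
    | (k22) "planar V E" "VQ = K22_V" "EQ = K22_E"
    | (ev) n where "planar V E" "even n" "VQ = {..<n}" "EQ = {}"
    | (od) n where "outerplanar V E" "odd n" "VQ = {..<n}" "EQ = {}"
    by blast
  then show ?thesis
  proof cases
    case k11
    obtain pos gam where ge: "graph_embedding (Euclidean_space 2) V E pos gam" using k11(1) unfolding planar_def by blast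
    have q: "qcfg K11_V K11_E htE QP11" using qcfg_K11 by (simp add: K11_V_def K11_E_def)
    show ?thesis using general[OF ge assms(1) subset_refl q] k11 unfolding join_V_def join_E_def by simp
  next
    case k22
    obtain pos gam where ge: "graph_embedding (Euclidean_space 2) V E pos gam" using k22(1) unfolding planar_def by blast
    show ?thesis using general[OF ge assms(1) subset_refl qcfg_K22] k22 unfolding join_V_def join_E_def by simp
  next
    case ev
    obtain pos gam where ge: "graph_embedding (Euclidean_space 2) V E pos gam" using ev(1) unfolding planar_def by blast
    show ?thesis using general[OF ge assms(1) subset_refl qcfg_even[OF ev(2)]] ev unfolding join_V_def join_E_def by simp
  next
    case od
    have pj: "planar (join_V V {()}) (join_E V E {()} {})" using od(1) unfolding outerplanar_def by blast
    obtain pos gam where ge: "graph_embedding (Euclidean_space 2) (join_V V {()}) (join_E V E {()} {}) pos gam"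
      using pj unfolding planar_def by blast
    have sg: "simple_graph (join_V V {()}) (join_E V E {()} {})" by (rule join_simple[OF assms(1)])
    have B0: "Inl ` V \<subseteq> join_V V {()}" by (auto simp: join_V_def)
    have n0: "0 < n" using od(2) by (cases n) auto
    have evn: "even (n - 1)" using od(2) n0 by simp
    let ?W = "Inl ` join_V V {()} \<union> Inr ` {..<n - 1}"
    let ?EW = "image Inl ` join_E V E {()} {} \<union> image Inr ` {} \<union> {{Inl a, Inr b} | a b. a \<in> Inl ` V \<and> b \<in> {..<n - 1}}"
    have A: "achirally_embeddable ?W ?EW"
      by (rule general[OF ge sg B0 qcfg_even[OF evn]])
    have sub: "\<And>e. e \<in> ?EW \<Longrightarrow> e \<subseteq> ?W"
    proof -
      fix e assume "e \<in> ?EW"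
      then consider (a) e0 where "e0 \<in> join_E V E {()} {}" "e = Inl ` e0"
        | (b) a b where "a \<in> V" "b < n - 1" "e = {Inl (Inl a), Inr b}" by blast
      thus "e \<subseteq> ?W"
      proof cases
        case a
        hence "e0 \<subseteq> join_V V {()}" using simple_graph_facts(3)[OF sg] by blast
        thus ?thesis using a by blast
      next
        case b
        thus ?thesis by (auto simp: join_V_def)
      qed
    qed
    have "achirally_embeddable (relab ` ?W) ((image relab) ` ?EW)"
      by (rule achiral_iso[OF A inj_on_subset[OF relab_inj subset_UNIV] sub])
    thus ?thesis using relab_V[OF n0, of V] relab_E[OF n0, of V E] od by simp
  qed
qed

end
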